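(* Let ${\bf v}=(v^1,\dots,v^n)$ and consider a $2+1$ dimensional system in Godunov form $$(F_{0,i})_t+(F_{1,i})_x+(F_{2,i})_y=0,\qquad i=1,\dots,n,$$ where $F_0,F_1,F_2$ are functions of ${\bf v}$ and $F_{\alpha,i}=\partial F_\alpha/\partial v^i$. Let $l^1,\dots,l^n,l$ be (inhomogeneous) linear forms in ${\bf v}$ whose $(n+1)\times(n+1)$ coefficient matrix is nondegenerate, and define $$\tilde v^i=\frac{l^i({\bf v})}{l({\bf v})},\qquad \tilde F_\alpha=\frac{F_\alpha}{l({\bf v})},\quad \alpha=0,1,2,$$ with $\tilde F_\alpha$ regarded as functions of $\tilde{\bf v}$. Then the system is equivalent to the system of the same Godunov form $$(\tilde F_{0,i})_t+(\tilde F_{1,i})_x+(\tilde F_{2,i})_y=0,\qquad i=1,\dots,n,\qquad \tilde F_{\alpha,i}=\partial\tilde F_\alpha/\partial\tilde v^i,$$ i.e. the Godunov representation is form-invariant under this projective action of $GL_{n+1}$. *)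

theory Defs
  imports "HOL-Analysis.Analysis"
begin

definition vpd :: "(real^'n \<Rightarrow> real) \<Rightarrow> 'n \<Rightarrow> real^'n \<Rightarrow> real" where
  "vpd F i v = frechet_derivative F (at v) (axis i 1)"

text \<open>Classical solutions of the Godunov-form system
  sum over alpha of partial_alpha (F_{alpha,i}(u)) = 0, i = 1..n, on an open set of
  space-time points p = (t,x,y) :: real^3 (coordinate 1 = t, 2 = x, 3 = y).
  The index alpha :: 3 labels F_0, F_1, F_2.\<close>
definition godunov_solution ::
  "(3 \<Rightarrow> real^'n \<Rightarrow> real) \<Rightarrow> (real^3) set \<Rightarrow> (real^3 \<Rightarrow> real^'n) \<Rightarrow> bool" where
  "godunov_solution F \<Omega> u \<longleftrightarrow>
     (\<forall>p\<in>\<Omega>. \<forall>i. \<exists>d :: 3 \<Rightarrow> real.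
        (\<forall>\<alpha>. ((\<lambda>s. vpd (F \<alpha>) i (u (p + s *\<^sub>R axis \<alpha> 1))) has_real_derivative d \<alpha>) (at 0))
        \<and> (\<Sum>\<alpha>\<in>UNIV. d \<alpha>) = 0)"

definition hom :: "real^'n \<Rightarrow> real^('n option)" where
  "hom v = (\<chi> k. case k of None \<Rightarrow> 1 | Some j \<Rightarrow> v $ j)"

text \<open>The inhomogeneous linear forms with coefficient matrix M:
  lform M (Some i) = l^i, lform M None = l.\<close>
definition lform :: "real^('n option)^('n option) \<Rightarrow> 'n option \<Rightarrow> real^'n \<Rightarrow> real" where
  "lform M k v = (M *v hom v) $ k"

definition proj :: "real^('n option)^('n option) \<Rightarrow> real^'n \<Rightarrow> real^'n" where
  "proj M v = (\<chi> i. lform M (Some i) v / lform M None v)"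

end

theory Submission
  imports Defs
begin

lemma lform_eq: "lform M k v = (\<Sum>j\<in>UNIV. M$k$Some j * v$j) + M$k$None"
  unfolding lform_def matrix_vector_mult_def hom_def
  by (simp add: UNIV_option_conv sum.reindex)

lemma lform_has_derivative:
  "(lform M k has_derivative (\<lambda>h. \<Sum>j\<in>UNIV. M$k$Some j * h$j)) (at v)"
  unfolding lform_eq[abs_def]
  by (auto intro!: derivative_eq_intros bounded_linear_imp_has_derivative)

lemma lform_axis: "lform M k (v + t *\<^sub>R axis j 1) = lform M k v + t * M$k$Some j"
proof -
  have "\<And>j'. M$k$Some j' * (v + t *\<^sub>R axis j 1)$j' = M$k$Some j' * v$j' + (if j' = j then t * M$k$Some j else 0)"
    by (simp add: axis_def algebra_simps)
  then show ?thesis unfolding lform_eq by (simp add: sum.distrib)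
qed

lemma proj_eq: "proj M v = inverse (lform M None v) *\<^sub>R
   ((\<chi> i j. M$Some i$Some j) *v v + (\<chi> i. M$Some i$None))"
  unfolding proj_def by (simp add: vec_eq_iff lform_eq matrix_vector_mult_def divide_inverse mult.commute)

lemma proj_differentiable:
  assumes "lform M None v \<noteq> 0" shows "proj M differentiable (at v)"
proof -
  have "(\<lambda>v. inverse (lform M None v) *\<^sub>R
   ((\<chi> i j. M$Some i$Some j) *v v + (\<chi> i. M$Some i$None))) differentiable (at v)"
    using has_derivative_scaleR[OF Deriv.has_derivative_inverse[OF assms lform_has_derivative]
       has_derivative_add[OF bounded_linear_imp_has_derivative[OF matrix_vector_mul_bounded_linear] has_derivative_const]]
    by (auto simp: differentiable_def)
  then show ?thesis unfolding proj_eq[abs_def] .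
qed

lemma hom_proj: assumes "lform M None v \<noteq> 0"
  shows "hom (proj M v) = inverse (lform M None v) *\<^sub>R (M *v hom v)"
  using assms unfolding vec_eq_iff
  by (auto simp: hom_def proj_def lform_def split: option.splits simp: divide_inverse mult.commute)

lemma proj_inv:
  assumes "N ** M = mat 1" "lform M None v \<noteq> 0"
  shows "lform N None (proj M v) = inverse (lform M None v)" "proj N (proj M v) = v"
proof -
  have "N *v hom (proj M v) = inverse (lform M None v) *\<^sub>R hom v"
    using assms by (simp add: hom_proj matrix_vector_mul_assoc scalar_mult_eq_scaleR[symmetric]
        vector_scalar_commute)
  then have *: "\<And>k. lform N k (proj M v) = inverse (lform M None v) * hom v $ k"
    unfolding lform_def by simp
  show "lform N None (proj M v) = inverse (lform M None v)" using * by (simp add: hom_def)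
  show "proj N (proj M v) = v" using * assms(2) by (simp add: proj_def hom_def vec_eq_iff)
qed

lemma vpd_expand:
  assumes "f differentiable (at v)"
  shows "frechet_derivative f (at v) x = (\<Sum>j\<in>UNIV. x$j * vpd f j v)"
proof -
  have "bounded_linear (frechet_derivative f (at v))"
    using assms frechet_derivative_works has_derivative_bounded_linear by blast
  then have L: "linear (frechet_derivative f (at v))" by (rule bounded_linear.linear)
  have "frechet_derivative f (at v) x = frechet_derivative f (at v) (\<Sum>j\<in>UNIV. x$j *\<^sub>R axis j 1)"
    using basis_expansion[of x] by (simp add: scalar_mult_eq_scaleR)
  also have "\<dots> = (\<Sum>j\<in>UNIV. x$j * vpd f j v)"
    by (simp add: linear_sum[OF L] linear_scale[OF L] vpd_def)
  finally show ?thesis .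
qed

lemma chain_dir:
  assumes g: "g differentiable (at (c 0))" and c: "(c has_vector_derivative w) (at 0)"
  shows "((\<lambda>t. g (c t)) has_real_derivative (\<Sum>i\<in>UNIV. w$i * vpd g i (c 0))) (at 0)"
proof -
  have gd: "(g has_derivative frechet_derivative g (at (c 0))) (at (c 0))"
    using g frechet_derivative_works by blast
  have L: "linear (frechet_derivative g (at (c 0)))"
    using gd has_derivative_bounded_linear bounded_linear.linear by blast
  have cd: "(c has_derivative (\<lambda>t. t *\<^sub>R w)) (at 0)" using c by (simp add: has_vector_derivative_def)
  have "((g \<circ> c) has_derivative (frechet_derivative g (at (c 0)) \<circ> (\<lambda>t. t *\<^sub>R w))) (at 0)"
    by (rule diff_chain_at[OF cd gd])
  moreover have "(frechet_derivative g (at (c 0)) \<circ> (\<lambda>t. t *\<^sub>R w)) = (\<lambda>t. t * frechet_derivative g (at (c 0)) w)"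
    by (auto simp: linear_scale[OF L])
  moreover have "(\<lambda>t. t * frechet_derivative g (at (c 0)) w) = (*) (frechet_derivative g (at (c 0)) w)"
    by (auto simp: mult.commute)
  ultimately have "((\<lambda>t. g (c t)) has_real_derivative frechet_derivative g (at (c 0)) w) (at 0)"
    by (simp add: has_field_derivative_def o_def)
  then show ?thesis using vpd_expand[OF g] by simp
qed

lemma comp_dir:
  assumes c: "(c has_vector_derivative w) (at x)"
  shows "((\<lambda>t. c t $ j) has_real_derivative w$j) (at x)"
proof -
  have cd: "(c has_derivative (\<lambda>t. t *\<^sub>R w)) (at x)" using c by (simp add: has_vector_derivative_def)
  have "((\<lambda>t. c t $ j) has_derivative (\<lambda>t. (t *\<^sub>R w) $ j)) (at x)"
    using bounded_linear.has_derivative[OF bounded_linear_vec_nth cd] .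
  moreover have "(\<lambda>t. (t *\<^sub>R w) $ j) = (*) (w$j)" by (auto simp: mult.commute)
  ultimately show ?thesis by (simp add: has_field_derivative_def)
qed

lemma ev_in_open:
  assumes "isCont \<gamma> x" "open D" "\<gamma> x \<in> D"
  shows "eventually (\<lambda>t. \<gamma> t \<in> D) (nhds x)"
  using assms topological_tendstoD[of \<gamma> "\<gamma> x" "at x" D] by (auto simp: eventually_nhds_conv_at isCont_def)

lemma sum_axis: "(\<Sum>i\<in>UNIV. axis j (1::real) $ i * X i) = X j"
proof -
  have "\<And>i. axis j (1::real) $ i * X i = (if i = j then X j else 0)" by (simp add: axis_def)
  then show ?thesis by simp
qed

lemma ident_some:
  assumes D: "open D" and lnz: "\<forall>v\<in>D. lform M None v \<noteq> 0"
    and fg: "\<forall>v\<in>D. f v = lform M None v * g (proj M v)" and v: "v \<in> D"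
    and fd: "f differentiable (at v)" and gd: "g differentiable (at (proj M v))"
  shows "vpd f j v = M$None$Some j * (g (proj M v) - (\<Sum>i\<in>UNIV. proj M v $ i * vpd g i (proj M v)))
     + (\<Sum>i\<in>UNIV. M$Some i$Some j * vpd g i (proj M v))"
proof -
  define l where "l = lform M None v"
  define a where "a = M$None$Some j"
  define e where "e = (axis j 1 :: real^'a)"
  define pv where "pv = proj M v"
  define w where "w = (\<chi> i. M$Some i$Some j - a * pv$i)"
  define c where "c = (\<lambda>t. pv + (t / (l + t * a)) *\<^sub>R w)"
  have l0: "l \<noteq> 0" using lnz v l_def by auto
  have c0: "c 0 = pv" by (simp add: c_def)
  have "((\<lambda>t. t / (l + t * a)) has_real_derivative ((1 * (l + 0 * a) - 0 * (0 * a + 1 * a)) / ((l + 0*a) * (l + 0*a)))) (at 0)"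
    using l0 by (auto intro!: derivative_eq_intros)
  then have phi: "((\<lambda>t. t / (l + t * a)) has_real_derivative (1 / l)) (at 0)"
    using l0 by simp
  have cder: "(c has_vector_derivative (1/l) *\<^sub>R w) (at 0)"
    unfolding c_def
    using has_vector_derivative_scaleR[OF phi has_vector_derivative_const[of w]]
      has_vector_derivative_const[of pv] l0
    by (auto intro!: derivative_eq_intros)
  have d1: "((\<lambda>t. (l + t * a) * g (c t)) has_real_derivative
      ((0 + 1 * a) * g (c 0) + (l + 0 * a) * (\<Sum>i\<in>UNIV. ((1/l) *\<^sub>R w)$i * vpd g i (c 0)))) (at 0)"
  proof -
    have da: "((\<lambda>t. l + t * a) has_real_derivative a) (at 0)"
      by (auto intro!: derivative_eq_intros)
    have db: "((\<lambda>t. g (c t)) has_real_derivative (\<Sum>i\<in>UNIV. ((1/l) *\<^sub>R w)$i * vpd g i (c 0))) (at 0)"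
      by (rule chain_dir[OF _ cder]) (simp add: c0 gd pv_def)
    show ?thesis using DERIV_mult[OF da db] by (simp add: c0 mult.commute)
  qed
  have lineD: "((\<lambda>t. v + t *\<^sub>R e) has_vector_derivative e) (at 0)"
    by (auto intro!: derivative_eq_intros)
  have d2: "((\<lambda>t. f (v + t *\<^sub>R e)) has_real_derivative vpd f j v) (at 0)"
    using chain_dir[OF _ lineD, of f] fd by (simp add: e_def sum_axis)
  have ev: "eventually (\<lambda>t. v + t *\<^sub>R e \<in> D) (nhds 0)"
    by (rule ev_in_open) (auto simp: D v intro!: continuous_intros)
  have ev2: "eventually (\<lambda>t. f (v + t *\<^sub>R e) = (l + t * a) * g (c t)) (nhds 0)"
    using ev
  proof eventually_elim
    case (elim t)
    have lt: "lform M None (v + t *\<^sub>R e) = l + t * a" by (simp add: e_def lform_axis l_def a_def)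
    have lt0: "l + t * a \<noteq> 0" using lnz elim lt by auto
    have "proj M (v + t *\<^sub>R e) = c t"
      unfolding vec_eq_iff proof
      fix i
      show "proj M (v + t *\<^sub>R e) $ i = c t $ i"
      proof -
        define L where "L = lform M (Some i) v"
        define b where "b = M$Some i$Some j"
        have "(L + t * b) / (l + t * a) = L / l + t / (l + t * a) * (b - a * (L / l))"
        proof -
          have nz: "l * (l + t * a) \<noteq> 0" using l0 lt0 by simp
          have "L / l + t / (l + t * a) * (b - a * (L / l)) = (L * (l + t * a) + t * (b * l - a * L)) / (l * (l + t * a))"
            using l0 lt0 by (simp add: diff_divide_distrib add_divide_distrib) (simp add: field_simps)
          also have "\<dots> = (l * (L + t * b)) / (l * (l + t * a))" by (simp add: algebra_simps)
          also have "\<dots> = (L + t * b) / (l + t * a)" using l0 by simp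
          finally show ?thesis by simp
        qed
        then show ?thesis
          unfolding c_def w_def pv_def proj_def
          by (simp add: e_def lform_axis l_def[symmetric] a_def[symmetric] L_def[symmetric] b_def[symmetric])
      qed
    qed
    then show ?case using fg elim lt by simp
  qed
  have "vpd f j v = (0 + 1 * a) * g (c 0) + (l + 0 * a) * (\<Sum>i\<in>UNIV. ((1/l) *\<^sub>R w)$i * vpd g i (c 0))"
    using DERIV_unique[OF d2 iffD2[OF DERIV_cong_ev[OF refl ev2 refl] d1]] .
  also have "\<dots> = a * g pv + (\<Sum>i\<in>UNIV. w$i * vpd g i pv)"
    using l0 by (simp add: c0 sum_distrib_left)
  also have "\<dots> = a * (g pv - (\<Sum>i\<in>UNIV. pv $ i * vpd g i pv)) + (\<Sum>i\<in>UNIV. M$Some i$Some j * vpd g i pv)"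
    by (simp add: w_def algebra_simps sum_subtractf sum_distrib_left)
  finally show ?thesis by (simp add: a_def pv_def)
qed

definition hg :: "(real^'n \<Rightarrow> real) \<Rightarrow> real^'n \<Rightarrow> real^('n option)" where
  "hg f v = (\<chi> k. case k of None \<Rightarrow> f v - (\<Sum>j\<in>UNIV. v$j * vpd f j v) | Some j \<Rightarrow> vpd f j v)"

lemma transpose_mv_component:
  "(transpose M *v x) $ k = M$None$k * x$None + (\<Sum>i\<in>UNIV. M$Some i$k * x$Some i)"
  by (simp add: matrix_vector_mult_def transpose_def UNIV_option_conv sum.reindex)

lemma ident:
  assumes D: "open D" and lnz: "\<forall>v\<in>D. lform M None v \<noteq> 0"
    and fg: "\<forall>v\<in>D. f v = lform M None v * g (proj M v)" and v: "v \<in> D"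
    and fd: "f differentiable (at v)" and gd: "g differentiable (at (proj M v))"
  shows "hg f v = transpose M *v hg g (proj M v)"
proof -
  define pv where "pv = proj M v"
  define Gi where "Gi = (\<lambda>i. vpd g i pv)"
  define H where "H = g pv - (\<Sum>i\<in>UNIV. pv $ i * Gi i)"
  define l where "l = lform M None v"
  have l0: "l \<noteq> 0" using lnz v l_def by auto
  have Fj: "\<And>j. vpd f j v = M$None$Some j * H + (\<Sum>i\<in>UNIV. M$Some i$Some j * Gi i)"
    using ident_some[OF D lnz fg v fd gd] by (simp add: H_def Gi_def pv_def mult.commute)
  have S1: "(\<Sum>j\<in>UNIV. v$j * vpd f j v) = H * (\<Sum>j\<in>UNIV. M$None$Some j * v$j)
      + (\<Sum>i\<in>UNIV. Gi i * (\<Sum>j\<in>UNIV. M$Some i$Some j * v$j))"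
  proof -
    have "(\<Sum>j\<in>UNIV. v$j * vpd f j v) = (\<Sum>j\<in>UNIV. H * (M$None$Some j * v$j) + (\<Sum>i\<in>UNIV. Gi i * (M$Some i$Some j * v$j)))"
      by (rule sum.cong) (simp_all add: Fj distrib_left sum_distrib_left mult_ac)
    also have "\<dots> = H * (\<Sum>j\<in>UNIV. M$None$Some j * v$j) + (\<Sum>j\<in>UNIV. \<Sum>i\<in>UNIV. Gi i * (M$Some i$Some j * v$j))"
      by (simp add: sum.distrib sum_distrib_left)
    also have "(\<Sum>j\<in>UNIV. \<Sum>i\<in>UNIV. Gi i * (M$Some i$Some j * v$j)) = (\<Sum>i\<in>UNIV. Gi i * (\<Sum>j\<in>UNIV. M$Some i$Some j * v$j))"
      by (subst sum.swap) (simp add: sum_distrib_left)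
    finally show ?thesis .
  qed
  have S2: "\<And>k. (\<Sum>j\<in>UNIV. M$k$Some j * v$j) = lform M k v - M$k$None" by (simp add: lform_eq)
  have lp: "\<And>i. l * pv $ i = lform M (Some i) v" using l0 by (simp add: pv_def proj_def l_def)
  have fv: "f v = l * H + (\<Sum>i\<in>UNIV. lform M (Some i) v * Gi i)"
    using fg v by (simp add: l_def[symmetric] pv_def[symmetric] H_def algebra_simps sum_distrib_left lp[symmetric])
  have none: "f v - (\<Sum>j\<in>UNIV. v$j * vpd f j v) = M$None$None * H + (\<Sum>i\<in>UNIV. M$Some i$None * Gi i)"
    unfolding fv S1 S2 l_def[symmetric]
    by (simp add: algebra_simps sum_subtractf)
  show ?thesis
    unfolding vec_eq_iff
  proof
    fix k :: "'a option"
    show "hg f v $ k = (transpose M *v hg g (proj M v)) $ k"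
    proof (cases k)
      case None
      show ?thesis unfolding transpose_mv_component
        using none by (simp add: None hg_def pv_def[symmetric] Gi_def H_def mult.commute)
    next
      case (Some j)
      show ?thesis unfolding transpose_mv_component
        using Fj[of j] by (simp add: Some hg_def pv_def[symmetric] Gi_def H_def mult.commute)
    qed
  qed
qed

lemma line_vd:
  assumes "u differentiable (at p)"
  shows "((\<lambda>s. u (p + s *\<^sub>R e)) has_vector_derivative frechet_derivative u (at p) e) (at 0)"
proof -
  have "(u has_derivative frechet_derivative u (at p)) (at p)"
    using assms frechet_derivative_works by blast
  then have ud: "(u has_derivative frechet_derivative u (at p)) (at (p + 0 *\<^sub>R e))" by simp
  have L: "linear (frechet_derivative u (at p))"
    using ud has_derivative_bounded_linear bounded_linear.linear by blast
  have ld: "((\<lambda>s. p + s *\<^sub>R e) has_derivative (\<lambda>s. s *\<^sub>R e)) (at 0)"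
    by (auto intro!: derivative_eq_intros)
  have "((u \<circ> (\<lambda>s. p + s *\<^sub>R e)) has_derivative (frechet_derivative u (at p) \<circ> (\<lambda>s. s *\<^sub>R e))) (at 0)"
    by (rule diff_chain_at[OF ld ud])
  moreover have "frechet_derivative u (at p) \<circ> (\<lambda>s. s *\<^sub>R e) = (\<lambda>s. s *\<^sub>R frechet_derivative u (at p) e)"
    by (auto simp: linear_scale[OF L])
  ultimately show ?thesis by (simp add: has_vector_derivative_def o_def)
qed

lemma dir:
  fixes M N :: "real^('n::finite option)^('n option)"
    and F G :: "3 \<Rightarrow> real^'n \<Rightarrow> real"
    and u :: "real^3 \<Rightarrow> real^'n"
  assumes NM: "N ** transpose M = mat 1"
    and D: "open D" and lnz: "\<forall>v\<in>D. lform M None v \<noteq> 0"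
    and F_diff: "\<forall>\<alpha>. \<forall>v\<in>D. F \<alpha> differentiable (at v)"
    and G_diff: "\<forall>\<alpha>. \<forall>v\<in>D. G \<alpha> differentiable (at (proj M v))"
    and fg: "\<forall>\<alpha>. \<forall>v\<in>D. F \<alpha> v = lform M None v * G \<alpha> (proj M v)"
    and u_diff: "\<forall>p\<in>\<Omega>. u differentiable (at p)"
    and u_range: "u ` \<Omega> \<subseteq> D"
    and sol: "godunov_solution F \<Omega> u"
  shows "godunov_solution G \<Omega> (proj M \<circ> u)"
  unfolding godunov_solution_def
proof (intro ballI allI)
  fix p i assume p: "p \<in> \<Omega>"
  have "\<forall>j. \<exists>d :: 3 \<Rightarrow> real.
        (\<forall>\<alpha>. ((\<lambda>s. vpd (F \<alpha>) j (u (p + s *\<^sub>R axis \<alpha> 1))) has_real_derivative d \<alpha>) (at 0))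
        \<and> (\<Sum>\<alpha>\<in>UNIV. d \<alpha>) = 0"
    using sol p unfolding godunov_solution_def by blast
  then obtain dd where dd: "\<And>j. (\<forall>\<alpha>. ((\<lambda>s. vpd (F \<alpha>) j (u (p + s *\<^sub>R axis \<alpha> 1))) has_real_derivative dd j \<alpha>) (at 0))
        \<and> (\<Sum>\<alpha>\<in>UNIV. dd j \<alpha>) = 0"
    by metis
  define \<gamma> where "\<gamma> = (\<lambda>\<alpha> s. u (p + s *\<^sub>R axis \<alpha> 1))"
  define w where "w = (\<lambda>\<alpha>. frechet_derivative u (at p) (axis \<alpha> 1))"
  define a where "a = (\<lambda>\<alpha> k. case k of None \<Rightarrow> - (\<Sum>j\<in>UNIV. u p $ j * dd j \<alpha>) | Some j \<Rightarrow> dd j \<alpha>)"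
  have up: "u p \<in> D" using p u_range by auto
  have g0: "\<And>\<alpha>. \<gamma> \<alpha> 0 = u p" by (simp add: \<gamma>_def)
  have gvd: "\<And>\<alpha>. (\<gamma> \<alpha> has_vector_derivative w \<alpha>) (at 0)"
    unfolding \<gamma>_def w_def using line_vd u_diff p by blast
  have ev: "\<And>\<alpha>. eventually (\<lambda>s. \<gamma> \<alpha> s \<in> D) (nhds 0)"
  proof -
    fix \<alpha>
    have "isCont (\<gamma> \<alpha>) 0"
      using gvd[of \<alpha>] has_derivative_continuous[of "\<gamma> \<alpha>" _ 0 UNIV] unfolding has_vector_derivative_def by simp
    then show "eventually (\<lambda>s. \<gamma> \<alpha> s \<in> D) (nhds 0)"
      by (rule ev_in_open) (simp_all add: D g0 up)
  qed
  have dA: "\<And>\<alpha> k. ((\<lambda>s. hg (F \<alpha>) (\<gamma> \<alpha> s) $ k) has_real_derivative a \<alpha> k) (at 0)"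
  proof -
    fix \<alpha> k
    show "((\<lambda>s. hg (F \<alpha>) (\<gamma> \<alpha> s) $ k) has_real_derivative a \<alpha> k) (at 0)"
    proof (cases k)
      case (Some j)
      then show ?thesis using dd[of j] by (simp add: hg_def a_def \<gamma>_def)
    next
      case None
      have d1: "((\<lambda>s. F \<alpha> (\<gamma> \<alpha> s)) has_real_derivative (\<Sum>j\<in>UNIV. w \<alpha> $ j * vpd (F \<alpha>) j (u p))) (at 0)"
        using chain_dir[OF _ gvd[of \<alpha>], of "F \<alpha>"] F_diff up by (simp add: g0)
      have d2: "((\<lambda>s. \<Sum>j\<in>UNIV. \<gamma> \<alpha> s $ j * vpd (F \<alpha>) j (\<gamma> \<alpha> s)) has_real_derivative
          (\<Sum>j\<in>UNIV. w \<alpha> $ j * vpd (F \<alpha>) j (\<gamma> \<alpha> 0) + \<gamma> \<alpha> 0 $ j * dd j \<alpha>)) (at 0)"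
      proof (rule DERIV_sum)
        fix j
        have "((\<lambda>s. vpd (F \<alpha>) j (\<gamma> \<alpha> s)) has_real_derivative dd j \<alpha>) (at 0)"
          using dd[of j] by (simp add: \<gamma>_def)
        from DERIV_mult[OF comp_dir[OF gvd[of \<alpha>], of j] this]
        show "((\<lambda>s. \<gamma> \<alpha> s $ j * vpd (F \<alpha>) j (\<gamma> \<alpha> s)) has_real_derivative
          w \<alpha> $ j * vpd (F \<alpha>) j (\<gamma> \<alpha> 0) + \<gamma> \<alpha> 0 $ j * dd j \<alpha>) (at 0)"
          by (simp add: mult.commute)
      qed
      have "((\<lambda>s. hg (F \<alpha>) (\<gamma> \<alpha> s) $ k) has_real_derivative
          (\<Sum>j\<in>UNIV. w \<alpha> $ j * vpd (F \<alpha>) j (u p)) - (\<Sum>j\<in>UNIV. w \<alpha> $ j * vpd (F \<alpha>) j (\<gamma> \<alpha> 0) + \<gamma> \<alpha> 0 $ j * dd j \<alpha>)) (at 0)"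
        using DERIV_diff[OF d1 d2] by (simp add: None hg_def)
      moreover have "(\<Sum>j\<in>UNIV. w \<alpha> $ j * vpd (F \<alpha>) j (u p)) - (\<Sum>j\<in>UNIV. w \<alpha> $ j * vpd (F \<alpha>) j (\<gamma> \<alpha> 0) + \<gamma> \<alpha> 0 $ j * dd j \<alpha>)
           = a \<alpha> k"
        by (simp add: None a_def g0 sum.distrib)
      ultimately show ?thesis by simp
    qed
  qed
  define d where "d = (\<lambda>\<alpha>. \<Sum>k\<in>UNIV. N$Some i$k * a \<alpha> k)"
  show "\<exists>d :: 3 \<Rightarrow> real.
        (\<forall>\<alpha>. ((\<lambda>s. vpd (G \<alpha>) i ((proj M \<circ> u) (p + s *\<^sub>R axis \<alpha> 1))) has_real_derivative d \<alpha>) (at 0))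
        \<and> (\<Sum>\<alpha>\<in>UNIV. d \<alpha>) = 0"
  proof (intro exI conjI allI)
    fix \<alpha> :: 3
    have dS: "((\<lambda>s. \<Sum>k\<in>UNIV. N$Some i$k * hg (F \<alpha>) (\<gamma> \<alpha> s) $ k) has_real_derivative d \<alpha>) (at 0)"
      unfolding d_def by (intro DERIV_sum DERIV_cmult dA)
    have evB: "eventually (\<lambda>s. (\<Sum>k\<in>UNIV. N$Some i$k * hg (F \<alpha>) (\<gamma> \<alpha> s) $ k)
         = vpd (G \<alpha>) i ((proj M \<circ> u) (p + s *\<^sub>R axis \<alpha> 1))) (nhds 0)"
      using ev[of \<alpha>]
    proof eventually_elim
      case (elim s)
      have "hg (F \<alpha>) (\<gamma> \<alpha> s) = transpose M *v hg (G \<alpha>) (proj M (\<gamma> \<alpha> s))"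
        using ident[OF D lnz _ elim] fg F_diff G_diff elim by blast
      then have "N *v hg (F \<alpha>) (\<gamma> \<alpha> s) = (N ** transpose M) *v hg (G \<alpha>) (proj M (\<gamma> \<alpha> s))"
        by (simp only: matrix_vector_mul_assoc)
      then have "N *v hg (F \<alpha>) (\<gamma> \<alpha> s) = hg (G \<alpha>) (proj M (\<gamma> \<alpha> s))"
        by (simp only: NM matrix_vector_mul_lid)
      then have "(N *v hg (F \<alpha>) (\<gamma> \<alpha> s)) $ Some i = hg (G \<alpha>) (proj M (\<gamma> \<alpha> s)) $ Some i" by simp
      then show ?case by (simp add: matrix_vector_mult_def hg_def \<gamma>_def)
    qed
    show "((\<lambda>s. vpd (G \<alpha>) i ((proj M \<circ> u) (p + s *\<^sub>R axis \<alpha> 1))) has_real_derivative d \<alpha>) (at 0)"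
      using iffD1[OF DERIV_cong_ev[OF refl evB refl] dS] .
  next
    have "(\<Sum>\<alpha>\<in>UNIV. d \<alpha>) = (\<Sum>k\<in>UNIV. N$Some i$k * (\<Sum>\<alpha>\<in>UNIV. a \<alpha> k))"
      unfolding d_def by (subst sum.swap) (simp add: sum_distrib_left)
    also have "\<dots> = 0"
    proof -
      have "\<And>k. (\<Sum>\<alpha>\<in>UNIV. a \<alpha> k) = 0"
      proof -
        fix k show "(\<Sum>\<alpha>\<in>UNIV. a \<alpha> k) = 0"
        proof (cases k)
          case None
          have "(\<Sum>\<alpha>\<in>UNIV. a \<alpha> k) = - (\<Sum>j\<in>UNIV. u p $ j * (\<Sum>\<alpha>\<in>UNIV. dd j \<alpha>))"
            by (simp add: None a_def sum_negf sum_distrib_left) (subst sum.swap, simp)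
          then show ?thesis using dd by simp
        next
          case (Some j) then show ?thesis using dd[of j] by (simp add: a_def)
        qed
      qed
      then show ?thesis by simp
    qed
    finally show "(\<Sum>\<alpha>\<in>UNIV. d \<alpha>) = 0" .
  qed
qed

lemma sol_cong:
  assumes O: "open \<Omega>" and eq: "\<forall>p\<in>\<Omega>. u p = u' p" and sol: "godunov_solution F \<Omega> u'"
  shows "godunov_solution F \<Omega> u"
  unfolding godunov_solution_def
proof (intro ballI allI)
  fix p i assume p: "p \<in> \<Omega>"
  obtain d :: "3 \<Rightarrow> real" where d: "\<forall>\<alpha>. ((\<lambda>s. vpd (F \<alpha>) i (u' (p + s *\<^sub>R axis \<alpha> 1))) has_real_derivative d \<alpha>) (at 0)"
     "(\<Sum>\<alpha>\<in>UNIV. d \<alpha>) = 0"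
    using sol p unfolding godunov_solution_def by blast
  show "\<exists>d :: 3 \<Rightarrow> real.
        (\<forall>\<alpha>. ((\<lambda>s. vpd (F \<alpha>) i (u (p + s *\<^sub>R axis \<alpha> 1))) has_real_derivative d \<alpha>) (at 0))
        \<and> (\<Sum>\<alpha>\<in>UNIV. d \<alpha>) = 0"
  proof (intro exI conjI allI)
    fix \<alpha> :: 3
    have "eventually (\<lambda>s. p + s *\<^sub>R axis \<alpha> 1 \<in> \<Omega>) (nhds 0)"
      by (rule ev_in_open) (auto simp: O p intro!: continuous_intros)
    then have ev: "eventually (\<lambda>s. vpd (F \<alpha>) i (u' (p + s *\<^sub>R axis \<alpha> 1)) = vpd (F \<alpha>) i (u (p + s *\<^sub>R axis \<alpha> 1))) (nhds 0)"
      by eventually_elim (simp add: eq)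
    show "((\<lambda>s. vpd (F \<alpha>) i (u (p + s *\<^sub>R axis \<alpha> 1))) has_real_derivative d \<alpha>) (at 0)"
      using iffD1[OF DERIV_cong_ev[OF refl ev refl]] d(1) by blast
  qed (rule d(2))
qed

theorem proposition1:
  fixes M :: "real^('n::finite option)^('n option)"
    and F G :: "3 \<Rightarrow> real^'n \<Rightarrow> real"
    and D :: "(real^'n) set"
    and \<Omega> :: "(real^3) set"
    and u :: "real^3 \<Rightarrow> real^'n"
  assumes nondeg: "det M \<noteq> 0"
    and D_open: "open D"
    and l_nz: "\<forall>v\<in>D. lform M None v \<noteq> 0"
    and F_diff: "\<forall>\<alpha>. \<forall>v\<in>D. F \<alpha> differentiable (at v)"
    and G_def: "\<forall>\<alpha>. \<forall>v\<in>D. G \<alpha> (proj M v) = F \<alpha> v / lform M None v"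
    and \<Omega>_open: "open \<Omega>"
    and u_diff: "\<forall>p\<in>\<Omega>. u differentiable (at p)"
    and u_range: "u ` \<Omega> \<subseteq> D"
  shows "godunov_solution F \<Omega> u \<longleftrightarrow> godunov_solution G \<Omega> (proj M \<circ> u)"
proof -
  obtain M' :: "real^('n option)^('n option)" where MM': "M ** M' = mat 1" and M'M: "M' ** M = mat 1"
    using nondeg invertible_det_nz[of M] unfolding invertible_def by blast
  define E where "E = {w. lform M' None w \<noteq> 0} \<inter> proj M' -` D"
  have openS: "open {w. lform M' None w \<noteq> 0}"
    unfolding lform_eq by (auto intro!: open_Collect_neq continuous_intros)
  have contS: "continuous_on {w. lform M' None w \<noteq> 0} (proj M')"
    by (rule continuous_at_imp_continuous_on)
       (use proj_differentiable differentiable_imp_continuous_within in blast)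
  have E_open: "open E" unfolding E_def
    by (rule continuous_open_preimage[OF contS openS D_open])
  have E2: "\<And>v. v \<in> D \<Longrightarrow> proj M v \<in> E"
    using proj_inv[OF M'M] l_nz unfolding E_def by auto
  have E3: "\<And>w. w \<in> E \<Longrightarrow> proj M (proj M' w) = w \<and> lform M None (proj M' w) = inverse (lform M' None w)"
    using proj_inv[OF MM'] unfolding E_def by auto
  have E4: "\<And>\<alpha> w. w \<in> E \<Longrightarrow> G \<alpha> w = lform M' None w * F \<alpha> (proj M' w)"
  proof -
    fix \<alpha> w assume w: "w \<in> E"
    then have "proj M' w \<in> D" by (simp add: E_def)
    then have "G \<alpha> (proj M (proj M' w)) = F \<alpha> (proj M' w) / lform M None (proj M' w)"
      using G_def by blast
    then show "G \<alpha> w = lform M' None w * F \<alpha> (proj M' w)"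
      using E3[OF w] by (simp add: divide_inverse mult.commute)
  qed
  have E5: "\<And>\<alpha> w. w \<in> E \<Longrightarrow> G \<alpha> differentiable (at w)"
  proof -
    fix \<alpha> w assume w: "w \<in> E"
    have c: "lform M' None w \<noteq> 0" "proj M' w \<in> D" using w by (auto simp: E_def)
    have "(F \<alpha> \<circ> proj M') differentiable (at w)"
      using differentiable_chain_at[OF proj_differentiable[OF c(1)]] F_diff c(2) by blast
    then have "(\<lambda>w. lform M' None w * F \<alpha> (proj M' w)) differentiable (at w)"
      using lform_has_derivative[of M' None w]
      by (intro differentiable_mult) (auto simp: differentiable_def o_def)
    then obtain D' where "((\<lambda>w. lform M' None w * F \<alpha> (proj M' w)) has_derivative D') (at w)"
      by (auto simp: differentiable_def)
    then have "(G \<alpha> has_derivative D') (at w)"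
      by (rule has_derivative_transform_within_open[OF _ E_open w]) (simp add: E4)
    then show "G \<alpha> differentiable (at w)" by (auto simp: differentiable_def)
  qed
  have fg: "\<forall>\<alpha>. \<forall>v\<in>D. F \<alpha> v = lform M None v * G \<alpha> (proj M v)"
    using G_def l_nz by simp
  show ?thesis
  proof
    assume sol: "godunov_solution F \<Omega> u"
    have NM: "transpose M' ** transpose M = mat 1"
      by (simp add: matrix_transpose_mul[symmetric] MM')
    show "godunov_solution G \<Omega> (proj M \<circ> u)"
      by (rule dir[OF NM D_open l_nz F_diff _ fg u_diff u_range sol]) (use E2 E5 in blast)
  next
    assume sol: "godunov_solution G \<Omega> (proj M \<circ> u)"
    have NM: "transpose M ** transpose M' = mat 1"
      by (simp add: matrix_transpose_mul[symmetric] M'M)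
    have lnz': "\<forall>w\<in>E. lform M' None w \<noteq> 0" by (simp add: E_def)
    have Fd: "\<forall>\<alpha>. \<forall>w\<in>E. F \<alpha> differentiable (at (proj M' w))"
      using F_diff by (simp add: E_def)
    have ud: "\<forall>p\<in>\<Omega>. (proj M \<circ> u) differentiable (at p)"
    proof
      fix p assume p: "p \<in> \<Omega>"
      have "lform M None (u p) \<noteq> 0" using l_nz u_range p by auto
      then show "(proj M \<circ> u) differentiable (at p)"
        using differentiable_chain_at[OF _ proj_differentiable] u_diff p by blast
    qed
    have ur: "(proj M \<circ> u) ` \<Omega> \<subseteq> E" using E2 u_range by auto
    have "godunov_solution F \<Omega> (proj M' \<circ> (proj M \<circ> u))"
      by (rule dir[OF NM E_open lnz' _ Fd _ ud ur sol]) (use E5 E4 in auto)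
    then show "godunov_solution F \<Omega> u"
      by (rule sol_cong[OF \<Omega>_open, rotated]) (use proj_inv[OF M'M] l_nz u_range in auto)
  qed
qed

end
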